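(* Suppose both $\nu$ and $\nu'$ are supported on a common set of $\ell$ atoms in $[-1,1]$, and each of these atoms is at distance at least $\gamma$ from all but at most $\ell'$ other atoms of this set. Let $\delta=\max_{i\in[\ell-1]}|m_i(\nu)-m_i(\nu')|$. Then \[W_1(\nu,\nu')\le\ell\Big(\frac{\ell4^{\ell-1}\delta}{\gamma^{\ell-\ell'-1}}\Big)^{\frac{1}{\ell'}}.\]
   Context: $m_i(\pi)=\mathbb{E}_\pi X^i$; $[\ell-1]=\{1,\dots,\ell-1\}$; $W_1$ is the 1-Wasserstein distance on $\mathbb{R}$. *)

theory Defs
  imports "HOL-Probability.Probability"
begin

definition moment :: "real pmf \<Rightarrow> nat \<Rightarrow> real" where
  "moment \<nu> i = measure_pmf.expectation \<nu> (\<lambda>x. x ^ i)"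

text \<open>1-Wasserstein distance: infimum over couplings of the expected distance.
  For finitely supported measures every coupling is discrete, so couplings are pmfs.\<close>
definition W1 :: "real pmf \<Rightarrow> real pmf \<Rightarrow> real" where
  "W1 \<nu> \<nu>' = Inf {measure_pmf.expectation \<pi> (\<lambda>(x, y). \<bar>x - y\<bar>) | \<pi>.
                    map_pmf fst \<pi> = \<nu> \<and> map_pmf snd \<pi> = \<nu>'}"

end

theory Submission
  imports Defs "HOL-Computational_Algebra.Polynomial"
begin


definition prodX :: "real set \<Rightarrow> real poly" where "prodX T = (\<Prod>y\<in>T. [:-y,1:])"

lemma prodX_deg: "finite T \<Longrightarrow> degree (prodX T) = card T"
  unfolding prodX_def by (subst degree_prod_eq_sum_degree) auto

lemma prodX_lc: "finite T \<Longrightarrow> coeff (prodX T) (card T) = 1"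
  using lead_coeff_prod[of "\<lambda>y. [:-y,1:]" T] prodX_deg[of T] unfolding prodX_def by simp

lemma prodX_zero: "finite T \<Longrightarrow> y \<in> T \<Longrightarrow> poly (prodX T) y = 0"
  unfolding prodX_def by (auto simp: poly_prod)

definition ip :: "(real \<Rightarrow> real) \<Rightarrow> real set \<Rightarrow> real poly" where
  "ip f S = (THE P. degree P < card S \<and> (\<forall>x\<in>S. poly P x = f x))"

lemma interp_ex: fixes S :: "real set" shows "finite S \<Longrightarrow> S \<noteq> {} \<Longrightarrow> \<exists>P. degree P < card S \<and> (\<forall>x\<in>S. poly P x = f x)"
proof (induction S rule: finite_induct)
  case empty then show ?case by simp
next
  case (insert x S)
  show ?case
  proof (cases "S = {}")
    case True
    then show ?thesis by (intro exI[of _ "[:f x:]"]) auto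
  next
    case False
    then obtain P where P: "degree P < card S" "\<forall>y\<in>S. poly P y = f y" using insert by auto
    have nz: "poly (prodX S) x \<noteq> 0" using insert(2,1) unfolding prodX_def by (auto simp: poly_prod)
    define Q where "Q = P + smult ((f x - poly P x) / poly (prodX S) x) (prodX S)"
    have "degree Q \<le> max (degree P) (degree (prodX S))"
      unfolding Q_def by (meson degree_add_le degree_smult_le le_trans max.cobounded1 max.cobounded2)
    then have "degree Q < card (insert x S)" using P insert prodX_deg[of S] by auto
    moreover have "\<forall>y\<in>insert x S. poly Q y = f y"
      using P nz insert prodX_zero[of S] by (auto simp: Q_def)
    ultimately show ?thesis by blast
  qed
qed

lemma ip_eqI: "finite S \<Longrightarrow> degree P < card S \<Longrightarrow> (\<forall>x\<in>S. poly P x = f x) \<Longrightarrow> ip f S = P"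
  unfolding ip_def
  by (rule the_equality) (auto intro: poly_eqI_degree[of S])

lemma ip: "finite S \<Longrightarrow> S \<noteq> {} \<Longrightarrow> degree (ip f S) < card S \<and> (\<forall>x\<in>S. poly (ip f S) x = f x)"
  using interp_ex[of S f] ip_eqI[of S _ f] by metis

definition lc :: "(real \<Rightarrow> real) \<Rightarrow> real set \<Rightarrow> real" where
  "lc f S = coeff (ip f S) (card S - 1)"

lemma coeff_lin_mult: fixes P :: "real poly" shows "coeff ([:c, 1:] * P) (Suc m) = c * coeff P (Suc m) + coeff P m"
  by (simp add: mult_pCons_left one_pCons[symmetric] del: one_pCons)

lemma neville:
  assumes S: "finite S" "u \<in> S" "v \<in> S" "u < v"
  shows "lc f S = (lc f (S-{u}) - lc f (S-{v})) / (v - u)"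
proof -
  define n where "n = card S"
  have n2: "n \<ge> 2"
  proof -
    have "card {u,v} \<le> card S" using S by (intro card_mono) auto
    then show ?thesis using S n_def by simp
  qed
  have cu: "card (S-{u}) = n - 1" "card (S-{v}) = n - 1" using S n_def by auto
  have ne: "S - {u} \<noteq> {}" "S - {v} \<noteq> {}" using S by auto
  define P1 where "P1 = ip f (S-{u})"
  define P2 where "P2 = ip f (S-{v})"
  have P1: "degree P1 < n - 1" "\<forall>x\<in>S-{u}. poly P1 x = f x"
    using ip[of "S-{u}" f] S ne cu unfolding P1_def by auto
  have P2: "degree P2 < n - 1" "\<forall>x\<in>S-{v}. poly P2 x = f x"
    using ip[of "S-{v}" f] S ne cu unfolding P2_def by auto
  define N where "N = smult (1/(v-u)) ([:-u,1:]*P1 - [:-v,1:]*P2)"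
  have d1: "degree ([:-u,1:]*P1) \<le> n - 1"
    using degree_mult_le[of "[:-u,1:]" P1] P1 n2 by simp
  have d2: "degree ([:-v,1:]*P2) \<le> n - 1"
    using degree_mult_le[of "[:-v,1:]" P2] P2 n2 by simp
  have "degree N \<le> n - 1" unfolding N_def
    using degree_smult_le degree_diff_le[OF d1 d2] le_trans by blast
  then have dN: "degree N < card S" using n2 n_def by simp
  have eN: "\<forall>x\<in>S. poly N x = f x"
  proof
    fix x assume x: "x \<in> S"
    show "poly N x = f x"
    proof (cases "x = u")
      case True
      then have "poly P2 x = f x" using P2 x S by auto
      then show ?thesis using True S by (simp add: N_def field_simps)
    next
      case False
      note F = False
      show ?thesis
      proof (cases "x = v")
        case True
        then have "poly P1 x = f x" using P1 x S by auto
        then show ?thesis using True S by (simp add: N_def field_simps)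
      next
        case False
        then have "poly P1 x = f x" "poly P2 x = f x" using P1 P2 x F by auto
        then show ?thesis using S by (simp add: N_def field_simps)
      qed
    qed
  qed
  have "ip f S = N" using ip_eqI[OF S(1) dN eN] .
  then have "lc f S = coeff N (n - 1)" unfolding lc_def n_def by simp
  also have "\<dots> = (coeff P1 (n-2) - coeff P2 (n-2)) / (v - u)"
  proof -
    have e: "n - 1 = Suc (n - 2)" using n2 by simp
    have z: "coeff P1 (Suc (n-2)) = 0" "coeff P2 (Suc (n-2)) = 0"
      using P1 P2 e by (auto intro: coeff_eq_0)
    show ?thesis unfolding N_def coeff_smult coeff_diff e coeff_lin_mult z by simp
  qed
  also have "\<dots> = (lc f (S-{u}) - lc f (S-{v})) / (v - u)"
    unfolding lc_def P1_def P2_def cu by (simp add: numeral_2_eq_2 diff_diff_left)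
  finally show ?thesis .
qed

lemma newton:
  assumes S: "finite S" "x \<in> S" "card S \<ge> 2"
  shows "ip f S = ip f (S-{x}) + smult (lc f S) (prodX (S-{x}))"
proof -
  define n where "n = card S"
  have c: "card (S-{x}) = n - 1" using S n_def by auto
  have I: "degree (ip f S) < n" "\<forall>y\<in>S. poly (ip f S) y = f y" using ip[of S f] S n_def by auto
  define R where "R = ip f S - smult (lc f S) (prodX (S-{x}))"
  have dp: "degree (prodX (S-{x})) = n - 1" using prodX_deg[of "S-{x}"] S c by simp
  have cp: "coeff (prodX (S-{x})) (n-1) = 1" using prodX_lc[of "S-{x}"] S c by simp
  have "degree R \<le> n - 2"
  proof (rule degree_le, intro allI impI)
    fix i assume i: "n - 2 < i"
    show "coeff R i = 0"
    proof (cases "i = n - 1")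
      case True
      then show ?thesis unfolding R_def using cp by (simp add: lc_def n_def)
    next
      case False
      then have "i > n - 1" using i S n_def by linarith
      then have "coeff (ip f S) i = 0" "coeff (prodX (S-{x})) i = 0"
        using I dp by (auto intro: coeff_eq_0)
      then show ?thesis unfolding R_def by simp
    qed
  qed
  then have dR: "degree R < card (S-{x})" using c S n_def by linarith
  have eR: "\<forall>y\<in>S-{x}. poly R y = f y"
    using I prodX_zero[of "S-{x}"] S unfolding R_def by auto
  have "ip f (S-{x}) = R" using ip_eqI[OF _ dR eR] S by simp
  then show ?thesis unfolding R_def by simp
qed



definition norm1 :: "real poly \<Rightarrow> real" where "norm1 P = (\<Sum>i\<le>degree P. \<bar>coeff P i\<bar>)"

lemma norm1_ext: "degree P \<le> n \<Longrightarrow> (\<Sum>i\<le>n. \<bar>coeff P i\<bar>) = norm1 P"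
  unfolding norm1_def by (rule sum.mono_neutral_right) (auto simp: coeff_eq_0)

lemma norm1_add: "norm1 (P + Q) \<le> norm1 P + norm1 Q"
proof -
  define n where "n = max (degree P) (degree Q)"
  have "norm1 (P + Q) = (\<Sum>i\<le>n. \<bar>coeff (P + Q) i\<bar>)"
    by (rule norm1_ext[symmetric]) (simp add: n_def degree_add_le)
  also have "\<dots> \<le> (\<Sum>i\<le>n. \<bar>coeff P i\<bar> + \<bar>coeff Q i\<bar>)"
    by (intro sum_mono) (simp add: abs_triangle_ineq)
  also have "\<dots> = norm1 P + norm1 Q"
    by (simp add: sum.distrib norm1_ext n_def)
  finally show ?thesis .
qed

lemma norm1_smult: "norm1 (smult c P) = \<bar>c\<bar> * norm1 P"
proof -
  have "norm1 (smult c P) = (\<Sum>i\<le>degree P. \<bar>coeff (smult c P) i\<bar>)"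
    by (rule norm1_ext[symmetric]) (simp add: degree_smult_le)
  also have "\<dots> = \<bar>c\<bar> * norm1 P" by (simp add: norm1_def abs_mult sum_distrib_left)
  finally show ?thesis .
qed

lemma norm1_pCons0: "norm1 (pCons 0 P) = norm1 P"
proof -
  have "norm1 (pCons 0 P) = (\<Sum>i\<le>Suc (degree P). \<bar>coeff (pCons 0 P) i\<bar>)"
    by (rule norm1_ext[symmetric]) (simp add: degree_pCons_le)
  also have "\<dots> = norm1 P" by (subst sum.atMost_Suc_shift) (simp add: norm1_def)
  finally show ?thesis .
qed

lemma norm1_lin: "norm1 ([:-y,1:] * P) \<le> (1 + \<bar>y\<bar>) * norm1 P"
proof -
  have "[:-y,1:] * P = smult (-y) P + pCons 0 P"
    by (simp add: mult_pCons_left one_pCons[symmetric] del: one_pCons)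
  then have i: "norm1 ([:-y,1:] * P) \<le> norm1 (smult (-y) P) + norm1 (pCons 0 P)"
    using norm1_add by metis
  have e: "norm1 (smult (-y) P) = \<bar>y\<bar> * norm1 P" using norm1_smult[of "-y" P] by simp
  have "norm1 ([:-y,1:] * P) \<le> norm1 P + \<bar>y\<bar> * norm1 P" using i e norm1_pCons0[of P] by linarith
  then show ?thesis by (simp add: algebra_simps)
qed

lemma norm1_prodX: "finite T \<Longrightarrow> T \<subseteq> {-1..1} \<Longrightarrow> norm1 (prodX T) \<le> 2 ^ card T"
proof (induction T rule: finite_induct)
  case empty
  then show ?case by (simp add: prodX_def norm1_def)
next
  case (insert y T)
  have "prodX (insert y T) = [:-y,1:] * prodX T" using insert by (simp add: prodX_def)
  then have "norm1 (prodX (insert y T)) \<le> (1 + \<bar>y\<bar>) * norm1 (prodX T)" using norm1_lin by simp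
  also have "\<dots> \<le> 2 * 2 ^ card T"
  proof (rule mult_mono)
    show "1 + \<bar>y\<bar> \<le> 2" using insert by auto
    show "norm1 (prodX T) \<le> 2 ^ card T" using insert by auto
  qed (auto simp: norm1_def)
  finally show ?case using insert by simp
qed

definition Phi :: "real set \<Rightarrow> (real \<Rightarrow> real) \<Rightarrow> real poly \<Rightarrow> real" where
  "Phi A D P = (\<Sum>x\<in>A. poly P x * D x)"

lemma Phi_add: "Phi A D (P + Q) = Phi A D P + Phi A D Q"
  by (simp add: Phi_def algebra_simps sum.distrib)

lemma Phi_smult: "Phi A D (smult c P) = c * Phi A D P"
  by (simp add: Phi_def sum_distrib_left algebra_simps)

lemma Phi_const: "Phi A D [:c:] = c * sum D A"
  by (simp add: Phi_def sum_distrib_left)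

lemma Phi_coeffs: "Phi A D P = (\<Sum>i\<le>degree P. coeff P i * (\<Sum>x\<in>A. x ^ i * D x))"
proof -
  have "Phi A D P = (\<Sum>x\<in>A. \<Sum>i\<le>degree P. coeff P i * (x ^ i * D x))"
    unfolding Phi_def poly_altdef by (rule sum.cong) (auto simp: sum_distrib_right mult.assoc)
  also have "\<dots> = (\<Sum>i\<le>degree P. \<Sum>x\<in>A. coeff P i * (x ^ i * D x))" by (rule sum.swap)
  also have "\<dots> = (\<Sum>i\<le>degree P. coeff P i * (\<Sum>x\<in>A. x ^ i * D x))"
    by (simp add: sum_distrib_left)
  finally show ?thesis .
qed

lemma Phi_bound:
  assumes "sum D A = 0" "\<forall>i. 1 \<le> i \<and> i \<le> N \<longrightarrow> \<bar>\<Sum>x\<in>A. x ^ i * D x\<bar> \<le> \<delta>" "\<delta> \<ge> 0"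
    "degree P \<le> N"
  shows "\<bar>Phi A D P\<bar> \<le> \<delta> * norm1 P"
proof -
  have "\<bar>Phi A D P\<bar> \<le> (\<Sum>i\<le>degree P. \<bar>coeff P i * (\<Sum>x\<in>A. x ^ i * D x)\<bar>)"
    unfolding Phi_coeffs by (rule sum_abs)
  also have "\<dots> \<le> (\<Sum>i\<le>degree P. \<bar>coeff P i\<bar> * \<delta>)"
  proof (intro sum_mono)
    fix i assume i: "i \<in> {..degree P}"
    have "\<bar>\<Sum>x\<in>A. x ^ i * D x\<bar> \<le> \<delta>"
    proof (cases "i = 0")
      case True then show ?thesis using assms by simp
    next
      case False then show ?thesis using assms i by auto
    qed
    then show "\<bar>coeff P i * (\<Sum>x\<in>A. x ^ i * D x)\<bar> \<le> \<bar>coeff P i\<bar> * \<delta>"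
      by (simp add: abs_mult mult_left_mono)
  qed
  also have "\<dots> = \<delta> * norm1 P" by (simp add: norm1_def sum_distrib_left mult.commute)
  finally show ?thesis .
qed



locale cut =
  fixes A :: "real set" and a b \<gamma> :: real and k :: nat
  assumes finA: "finite A" and subA: "A \<subseteq> {-1..1}" and aA: "a \<in> A" and bA: "b \<in> A"
    and ab: "a < b" and gap: "\<forall>c\<in>A. \<not> (a < c \<and> c < b)" and gpos: "\<gamma> > 0" and k1: "1 \<le> k"
    and nb: "\<forall>x\<in>A. card {y\<in>A. y \<noteq> x \<and> \<bar>x - y\<bar> < \<gamma>} \<le> k"
begin

definition g where "g = b - a"
definition f :: "real \<Rightarrow> real" where "f x = (if x \<le> a then 1 else 0)"
definition cc :: "nat \<Rightarrow> real" where "cc m = 1 / (g ^ (min m k) * \<gamma> ^ (m - k))"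

lemma g_pos: "g > 0" using ab by (simp add: g_def)

lemma g_le2: "g \<le> 2"
proof -
  have "a \<ge> -1" "b \<le> 1" using aA bA subA by auto
  then show ?thesis by (simp add: g_def)
qed

lemma cc_nonneg: "cc m \<ge> 0" using g_pos gpos by (simp add: cc_def)

lemma cc_Suc: "cc (Suc m) = cc m / (if m < k then g else \<gamma>)"
proof (cases "m < k")
  case True
  then have "min (Suc m) k = Suc m" "min m k = m" "Suc m - k = 0" "m - k = 0" by auto
  then show ?thesis using True g_pos by (simp add: cc_def)
next
  case False
  then have "min (Suc m) k = k" "min m k = k" "Suc m - k = Suc (m - k)" by auto
  then show ?thesis using False g_pos gpos by (simp add: cc_def)
qed

lemma far:
  assumes S: "S \<subseteq> A" "card S \<ge> k + 2"
  shows "Max S - Min S \<ge> \<gamma>"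
proof -
  have fS: "finite S" using S finA finite_subset by blast
  have ne: "S \<noteq> {}" using S by auto
  define u where "u = Min S"
  have uS: "u \<in> S" using fS ne by (simp add: u_def)
  have "\<exists>y\<in>S - {u}. \<bar>u - y\<bar> \<ge> \<gamma>"
  proof (rule ccontr)
    assume "\<not> ?thesis"
    then have "S - {u} \<subseteq> {y\<in>A. y \<noteq> u \<and> \<bar>u - y\<bar> < \<gamma>}" using S by (auto simp: not_le)
    then have "card (S - {u}) \<le> card {y\<in>A. y \<noteq> u \<and> \<bar>u - y\<bar> < \<gamma>}"
      by (intro card_mono) (use finA in auto)
    also have "\<dots> \<le> k" using nb uS S by auto
    finally show False using S uS fS by simp
  qed
  then obtain y where y: "y \<in> S" "\<bar>u - y\<bar> \<ge> \<gamma>" by auto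
  have "u \<le> y" "y \<le> Max S" using y fS by (auto simp: u_def)
  then show ?thesis using y by (simp add: u_def)
qed

lemma lc_bound: "S \<subseteq> A \<Longrightarrow> S \<noteq> {} \<Longrightarrow> \<bar>lc f S\<bar> \<le> 2 ^ (card S - 1) * cc (card S - 1)"
proof (induction "card S" arbitrary: S rule: less_induct)
  case less
  have fS: "finite S" using less finA finite_subset by blast
  then have c1: "card S \<ge> 1" using less by (simp add: Suc_le_eq card_gt_0_iff)
  show ?case
  proof (cases "card S = 1")
    case True
    then obtain x where S: "S = {x}" by (auto simp: card_Suc_eq)
    have "ip f S = [:f x:]" by (rule ip_eqI) (auto simp: S)
    then have "lc f S = f x" by (simp add: lc_def S)
    then show ?thesis using True by (simp add: cc_def f_def)
  next
    case False
    then have c2: "card S \<ge> 2" using c1 by simp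
    show ?thesis
    proof (cases "(\<forall>x\<in>S. x \<le> a) \<or> (\<forall>x\<in>S. x > a)")
      case True
      then have "(\<forall>x\<in>S. f x = 1) \<or> (\<forall>x\<in>S. f x = 0)" by (auto simp: f_def)
      then obtain c where "\<forall>x\<in>S. f x = c" by blast
      then have "ip f S = [:c:]" using fS c2 by (intro ip_eqI) auto
      then have "lc f S = 0" using c2 by (simp add: lc_def coeff_pCons split: nat.split)
      then show ?thesis using cc_nonneg by simp
    next
      case False
      then obtain x1 x2 where x: "x1 \<in> S" "x1 \<le> a" "x2 \<in> S" "x2 > a" by (auto simp: not_le)
      define u where "u = Min S"
      define v where "v = Max S"
      have uv: "u \<in> S" "v \<in> S" "u \<le> x1" "x2 \<le> v" using fS x using Min_in[OF fS] Max_in[OF fS] less(3) by (auto simp: u_def v_def)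
      have vb: "v \<ge> b" using gap uv x less(2) by force
      have ua: "u \<le> a" using uv x by simp
      have span: "v - u \<ge> g" using vb ua by (simp add: g_def)
      have lt: "u < v" using ua vb ab by simp
      have cS: "card (S - {u}) = card S - 1" "card (S - {v}) = card S - 1" using uv fS by auto
      have IH1': "\<bar>lc f (S - {u})\<bar> \<le> 2 ^ (card (S - {u}) - 1) * cc (card (S - {u}) - 1)"
        by (rule less(1)) (use cS less(2) c2 uv lt in auto)
      have e1: "card (S - {u}) - 1 = card S - 2" using cS by simp
      have IH1: "\<bar>lc f (S - {u})\<bar> \<le> 2 ^ (card S - 2) * cc (card S - 2)"
        using IH1' unfolding e1 .
      have IH2': "\<bar>lc f (S - {v})\<bar> \<le> 2 ^ (card (S - {v}) - 1) * cc (card (S - {v}) - 1)"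
        by (rule less(1)) (use cS less(2) c2 uv lt in auto)
      have e2: "card (S - {v}) - 1 = card S - 2" using cS by simp
      have IH2: "\<bar>lc f (S - {v})\<bar> \<le> 2 ^ (card S - 2) * cc (card S - 2)"
        using IH2' unfolding e2 .
      have "\<bar>lc f S\<bar> = \<bar>lc f (S - {u}) - lc f (S - {v})\<bar> / (v - u)"
        using neville[OF fS uv(1,2) lt] lt by simp
      also have "\<dots> \<le> (2 * (2 ^ (card S - 2) * cc (card S - 2))) / (v - u)"
        using IH1 IH2 lt by (intro divide_right_mono) auto
      also have "\<dots> = 2 ^ (card S - 1) * (cc (card S - 2) / (v - u))"
      proof -
        have "2 * 2 ^ (card S - 2) = (2::real) ^ (card S - 1)"
          using c2 by (metis Suc_diff_Suc Suc_1 Suc_le_lessD power_Suc diff_Suc_1)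
        then show ?thesis by simp
      qed
      also have "\<dots> \<le> 2 ^ (card S - 1) * cc (card S - 1)"
      proof (rule mult_left_mono)
        have e: "card S - 1 = Suc (card S - 2)" using c2 by simp
        have "cc (card S - 2) / (v - u) \<le> cc (card S - 2) / (if card S - 2 < k then g else \<gamma>)"
        proof (rule divide_left_mono)
          show "(if card S - 2 < k then g else \<gamma>) \<le> v - u"
          proof (cases "card S - 2 < k")
            case False
            then have "card S \<ge> k + 2" using c2 by simp
            then have "Max S - Min S \<ge> \<gamma>" using far less(2) by blast
            then show ?thesis using False by (simp add: u_def v_def)
          qed (use span in simp)
          show "0 < (v - u) * (if card S - 2 < k then g else \<gamma>)" using lt g_pos gpos by simp
        qed (rule cc_nonneg)
        then show "cc (card S - 2) / (v - u) \<le> cc (card S - 1)" unfolding e cc_Suc .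
      qed simp
      finally show ?thesis .
    qed
  qed
qed

end



context cut begin

lemma Phi_ip_bound:
  assumes D: "sum D A = 0" "\<forall>i. 1 \<le> i \<and> i \<le> card A - 1 \<longrightarrow> \<bar>\<Sum>x\<in>A. x ^ i * D x\<bar> \<le> \<delta>" "\<delta> \<ge> 0"
  shows "S \<subseteq> A \<Longrightarrow> S \<noteq> {} \<Longrightarrow> \<bar>Phi A D (ip f S)\<bar> \<le> \<delta> * (\<Sum>n\<in>{2..card S}. 4 ^ (n - 1) * cc (n - 1))"
proof (induction "card S" arbitrary: S rule: less_induct)
  case less
  have fS: "finite S" using less finA finite_subset by blast
  then have c1: "card S \<ge> 1" using less by (simp add: Suc_le_eq card_gt_0_iff)
  show ?case
  proof (cases "card S = 1")
    case True
    then obtain x where S: "S = {x}" by (auto simp: card_Suc_eq)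
    have "ip f S = [:f x:]" by (rule ip_eqI) (auto simp: S)
    then show ?thesis using D True by (simp add: Phi_const)
  next
    case False
    then have c2: "card S \<ge> 2" using c1 by simp
    obtain x where xS: "x \<in> S" using less by auto
    define S' where "S' = S - {x}"
    have cS': "card S' = card S - 1" using xS fS by (simp add: S'_def)
    have "card S' \<ge> 1" using cS' c2 by simp
    then have S'ne1: "S' \<noteq> {}" by (metis card.empty not_one_le_zero)
    have S'ne: "S' \<noteq> {}" "S' \<subseteq> A" using S'ne1 less(2) by (auto simp: S'_def)
    have fS': "finite S'" using fS by (simp add: S'_def)
    have IH: "\<bar>Phi A D (ip f S')\<bar> \<le> \<delta> * (\<Sum>n\<in>{2..card S'}. 4 ^ (n - 1) * cc (n - 1))"
      by (rule less(1)) (use cS' c2 S'ne in auto)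
    have "card S \<le> card A" using less(2) finA by (rule card_mono[rotated])
    then have dP: "degree (prodX S') \<le> card A - 1" using prodX_deg[OF fS'] cS' by simp
    have sub: "S' \<subseteq> {-1..1}" using S'ne subA by auto
    have PB: "\<bar>Phi A D (prodX S')\<bar> \<le> \<delta> * 2 ^ (card S - 1)"
    proof -
      have "\<bar>Phi A D (prodX S')\<bar> \<le> \<delta> * norm1 (prodX S')" by (rule Phi_bound[OF D(1) D(2) D(3) dP])
      also have "\<dots> \<le> \<delta> * 2 ^ (card S - 1)"
        using norm1_prodX[OF fS' sub] cS' D(3) by (intro mult_left_mono) auto
      finally show ?thesis .
    qed
    have LB: "\<bar>lc f S\<bar> \<le> 2 ^ (card S - 1) * cc (card S - 1)" by (rule lc_bound) (use less in auto)
    have eq: "Phi A D (ip f S) = Phi A D (ip f S') + lc f S * Phi A D (prodX S')"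
      using newton[OF fS xS c2, of f] by (simp add: S'_def Phi_add Phi_smult)
    have t: "\<bar>Phi A D (ip f S)\<bar> \<le> \<bar>Phi A D (ip f S')\<bar> + \<bar>lc f S\<bar> * \<bar>Phi A D (prodX S')\<bar>"
      unfolding eq using abs_triangle_ineq[of "Phi A D (ip f S')" "lc f S * Phi A D (prodX S')"]
      by (simp only: abs_mult)
    have B1: "0 \<le> 2 ^ (card S - 1) * cc (card S - 1)" using cc_nonneg by simp
    have m2: "\<bar>lc f S\<bar> * \<bar>Phi A D (prodX S')\<bar> \<le> (2 ^ (card S - 1) * cc (card S - 1)) * (\<delta> * 2 ^ (card S - 1))"
      by (rule mult_mono[OF LB PB B1 abs_ge_zero])
    obtain m where m: "card S = Suc m" "m \<ge> 1" using c2 by (intro that[of "card S - 1"]) auto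
    have p0: "(2::real) ^ m * 2 ^ m = (2 * 2) ^ m" by (rule power_mult_distrib[symmetric])
    have p: "(4::real) ^ m = 2 ^ m * 2 ^ m" using p0 by simp
    define F where "F n = (4::real) ^ (n - 1) * cc (n - 1)" for n
    have s: "(\<Sum>n\<in>{2..card S}. F n) = (\<Sum>n\<in>{2..m}. F n) + F (Suc m)"
      using m by (simp add: sum.cl_ivl_Suc)
    have cm: "card S' = m" "card S - 1 = m" using cS' m by auto
    have "\<bar>Phi A D (ip f S)\<bar> \<le> \<delta> * (\<Sum>n\<in>{2..m}. F n) + (2 ^ m * cc m) * (\<delta> * 2 ^ m)"
      using t IH m2 unfolding cm F_def by linarith
    also have "\<dots> = \<delta> * (\<Sum>n\<in>{2..card S}. F n)"
      unfolding s by (simp add: F_def p distrib_left mult.commute mult.left_commute)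
    finally show ?thesis unfolding F_def .
  qed
qed

lemma gam2: "k < card A - 1 \<Longrightarrow> \<gamma> \<le> 2"
proof -
  assume k: "k < card A - 1"
  have "\<not> (A - {a} \<subseteq> {y\<in>A. y \<noteq> a \<and> \<bar>a - y\<bar> < \<gamma>})"
  proof
    assume "A - {a} \<subseteq> {y\<in>A. y \<noteq> a \<and> \<bar>a - y\<bar> < \<gamma>}"
    then have "card (A - {a}) \<le> card {y\<in>A. y \<noteq> a \<and> \<bar>a - y\<bar> < \<gamma>}" by (intro card_mono) (use finA in auto)
    also have "\<dots> \<le> k" using nb aA by auto
    finally show False using k aA finA by simp
  qed
  then obtain y where y0: "y \<in> A - {a}" "y \<notin> {y\<in>A. y \<noteq> a \<and> \<bar>a - y\<bar> < \<gamma>}" by blast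
  then have y: "y \<in> A" "\<bar>a - y\<bar> \<ge> \<gamma>" by auto
  have "a \<in> {-1..1}" "y \<in> {-1..1}" using y aA subA by auto
  then have "\<bar>a - y\<bar> \<le> 2" by auto
  then show ?thesis using y by simp
qed

lemma Kcc:
  assumes m: "m \<le> card A - 1" and kl: "k \<le> card A - 1"
  shows "g ^ k * \<gamma> ^ (card A - 1 - k) * cc m \<le> 2 ^ (card A - 1 - m)"
proof -
  define L where "L = card A - 1"
  have e1: "g ^ k = g ^ (min m k) * g ^ (k - min m k)" by (simp add: power_add[symmetric])
  have e2: "\<gamma> ^ (L - k) = \<gamma> ^ (m - k) * \<gamma> ^ ((L - k) - (m - k))"
  proof -
    have "(m - k) + ((L - k) - (m - k)) = L - k" using m by (simp add: L_def)
    then show ?thesis by (simp only: power_add[symmetric])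
  qed
  have "g ^ k * \<gamma> ^ (L - k) * cc m = g ^ (k - min m k) * \<gamma> ^ ((L - k) - (m - k))"
    unfolding e1 e2 cc_def using g_pos gpos by (simp add: field_simps)
  also have "\<dots> \<le> 2 ^ (k - min m k) * 2 ^ ((L - k) - (m - k))"
  proof (rule mult_mono)
    show "g ^ (k - min m k) \<le> 2 ^ (k - min m k)" using g_pos g_le2 by (intro power_mono) auto
    show "\<gamma> ^ (L - k - (m - k)) \<le> 2 ^ (L - k - (m - k))"
    proof (cases "L - k - (m - k) = 0")
      case False
      then have "k < L" by simp
      then show ?thesis using gam2 gpos L_def by (intro power_mono) auto
    qed simp
  qed (use gpos in auto)
  also have "\<dots> = 2 ^ (L - m)"
  proof -
    have "(k - min m k) + ((L - k) - (m - k)) = L - m"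
    proof (cases "m \<le> k")
      case True
      then have "min m k = m" "m - k = 0" by auto
      then show ?thesis using True kl m L_def by simp
    next
      case False
      then have "min m k = k" by auto
      then show ?thesis using False kl m L_def by simp
    qed
    then show ?thesis by (simp add: power_add[symmetric])
  qed
  finally show ?thesis by (simp add: L_def)
qed

lemma D_bound:
  assumes D: "sum D A = 0" "\<forall>i. 1 \<le> i \<and> i \<le> card A - 1 \<longrightarrow> \<bar>\<Sum>x\<in>A. x ^ i * D x\<bar> \<le> \<delta>" "\<delta> \<ge> 0"
    and kl: "k \<le> card A - 1"
  shows "\<bar>\<Sum>x\<in>{y\<in>A. y \<le> a}. D x\<bar> \<le> \<delta> * (real (card A - 1) * 4 ^ (card A - 1) / (g ^ k * \<gamma> ^ (card A - 1 - k)))"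
proof -
  define L where "L = card A - 1"
  define K where "K = g ^ k * \<gamma> ^ (card A - 1 - k)"
  have Kpos: "K > 0" using g_pos gpos by (simp add: K_def)
  have Ane: "A \<noteq> {}" using aA by auto
  have "(\<Sum>x\<in>{y\<in>A. y \<le> a}. D x) = (\<Sum>x\<in>A. f x * D x)"
    using finA by (subst sum.inter_filter) (auto simp: f_def intro!: sum.cong)
  also have "\<dots> = Phi A D (ip f A)"
    using ip[OF finA Ane, of f] by (simp add: Phi_def)
  finally have e: "(\<Sum>x\<in>{y\<in>A. y \<le> a}. D x) = Phi A D (ip f A)" .
  have "\<bar>Phi A D (ip f A)\<bar> \<le> \<delta> * (\<Sum>n\<in>{2..card A}. 4 ^ (n - 1) * cc (n - 1))"
    by (rule Phi_ip_bound[OF D]) (use Ane in auto)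
  also have "\<dots> \<le> \<delta> * (\<Sum>n\<in>{2..card A}. 4 ^ L / K)"
  proof (intro mult_left_mono sum_mono)
    fix n assume n: "n \<in> {2..card A}"
    have m: "n - 1 \<le> card A - 1" using n by auto
    have "K * cc (n - 1) \<le> 2 ^ (L - (n - 1))" using Kcc[OF m kl] by (simp add: K_def L_def)
    then have "cc (n - 1) \<le> 2 ^ (L - (n - 1)) / K" using Kpos by (simp add: field_simps)
    then have "4 ^ (n - 1) * cc (n - 1) \<le> 4 ^ (n - 1) * (2 ^ (L - (n - 1)) / K)"
      by (rule mult_left_mono) simp
    also have "\<dots> \<le> 4 ^ (n - 1) * (4 ^ (L - (n - 1)) / K)"
      using Kpos by (intro mult_left_mono divide_right_mono power_mono) auto
    also have "\<dots> = 4 ^ ((n - 1) + (L - (n - 1))) / K" by (simp add: power_add)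
    also have "(n - 1) + (L - (n - 1)) = L" using m L_def by simp
    finally show "4 ^ (n - 1) * cc (n - 1) \<le> 4 ^ L / K" .
  qed (use D in auto)
  also have "\<dots> = \<delta> * (real (card A - 1) * 4 ^ (card A - 1) / (g ^ k * \<gamma> ^ (card A - 1 - k)))"
    by (simp add: K_def L_def)
  finally show ?thesis using e by simp
qed

end



definition consec :: "real set \<Rightarrow> real \<Rightarrow> real \<Rightarrow> bool" where
  "consec A a b \<longleftrightarrow> a \<in> A \<and> b \<in> A \<and> a < b \<and> (\<forall>c\<in>A. \<not> (a < c \<and> c < b))"

definition cum :: "real set \<Rightarrow> (real \<Rightarrow> real) \<Rightarrow> real \<Rightarrow> real" where
  "cum A p a = (\<Sum>x\<in>{y\<in>A. y \<le> a}. p x)"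

definition hyp :: "real set \<Rightarrow> real \<Rightarrow> (real \<Rightarrow> real) \<Rightarrow> (real \<Rightarrow> real) \<Rightarrow> bool" where
  "hyp A t p q \<longleftrightarrow> (\<forall>x\<in>A. p x \<ge> 0) \<and> (\<forall>x\<in>A. q x \<ge> 0) \<and> sum p A = sum q A \<and>
     (\<forall>a b. consec A a b \<longrightarrow> \<bar>cum A p a - cum A q a\<bar> * (b - a) \<le> t)"

definition coupl :: "real set \<Rightarrow> (real \<Rightarrow> real) \<Rightarrow> (real \<Rightarrow> real) \<Rightarrow> (real \<times> real \<Rightarrow> real) \<Rightarrow> bool" where
  "coupl A p q w \<longleftrightarrow> (\<forall>z. w z \<ge> 0) \<and> (\<forall>x y. w (x, y) \<noteq> 0 \<longrightarrow> x \<in> A \<and> y \<in> A) \<and>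
     (\<forall>x\<in>A. (\<Sum>y\<in>A. w (x, y)) = p x) \<and> (\<forall>y\<in>A. (\<Sum>x\<in>A. w (x, y)) = q y)"

definition cost :: "real set \<Rightarrow> (real \<times> real \<Rightarrow> real) \<Rightarrow> real" where
  "cost A w = (\<Sum>x\<in>A. \<Sum>y\<in>A. w (x, y) * \<bar>x - y\<bar>)"

lemma sum_upd_add: "finite S \<Longrightarrow> x \<in> S \<Longrightarrow> sum (f(x := f x + e)) S = sum f S + e"
proof -
  assume S: "finite S" "x \<in> S"
  have "sum (f(x := f x + e)) S = (f x + e) + sum (f(x := f x + e)) (S - {x})"
    using S by (simp add: sum.remove)
  also have "sum (f(x := f x + e)) (S - {x}) = sum f (S - {x})" by (rule sum.cong) auto
  also have "(f x + e) + sum f (S - {x}) = sum f S + e" using S by (simp add: sum.remove algebra_simps)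
  finally show ?thesis .
qed

lemma transport_step:
  assumes fin: "finite A'" and lt: "\<forall>y\<in>A'. a < y" and ne: "A' \<noteq> {}"
    and IH: "\<forall>p q. hyp A' t p q \<longrightarrow> (\<exists>w. coupl A' p q w \<and> cost A' w \<le> real (card A' - 1) * t)"
    and H: "hyp (insert a A') t p q" and pq: "p a \<ge> q a"
  shows "\<exists>w. coupl (insert a A') p q w \<and> cost (insert a A') w \<le> real (card (insert a A') - 1) * t"
proof -
  define A where "A = insert a A'"
  have aA': "a \<notin> A'" using lt by auto
  have finA: "finite A" using fin by (simp add: A_def)
  define a' where "a' = Min A'"
  have a'A': "a' \<in> A'" using fin ne by (simp add: a'_def)
  have a'min: "\<forall>y\<in>A'. a' \<le> y" using fin by (simp add: a'_def)
  have aa': "a < a'" using lt a'A' by auto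
  have aa'ne: "a \<noteq> a'" using aa' by simp
  have pn: "\<forall>x\<in>A. p x \<ge> 0" and qn: "\<forall>x\<in>A. q x \<ge> 0" and sA: "sum p A = sum q A"
    and cons: "\<forall>u v. consec A u v \<longrightarrow> \<bar>cum A p u - cum A q u\<bar> * (v - u) \<le> t"
    using H by (auto simp: hyp_def A_def)
  define e where "e = p a - q a"
  have e0: "e \<ge> 0" using pq by (simp add: e_def)
  define p' where "p' = p(a' := p a' + e)"
  define P2 where "P2 = p a' + e"
  have pa'0: "p a' \<ge> 0" using pn a'A' by (auto simp: A_def)
  have P20: "P2 \<ge> 0" using pa'0 e0 by (simp add: P2_def)
  have cumA: "cum A r u = r a + cum A' r u" if "u \<in> A'" for r u
  proof -
    have "{y\<in>A. y \<le> u} = insert a {y\<in>A'. y \<le> u}" using that lt by (auto simp: A_def)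
    then show ?thesis using fin aA' by (simp add: cum_def)
  qed
  have H': "hyp A' t p' q"
    unfolding hyp_def
  proof (intro conjI allI impI ballI)
    fix x assume "x \<in> A'" then show "p' x \<ge> 0" using pn e0 by (auto simp: p'_def A_def)
  next
    fix x assume "x \<in> A'" then show "q x \<ge> 0" using qn by (auto simp: A_def)
  next
    have "sum p' A' = sum p A' + e" unfolding p'_def by (rule sum_upd_add[OF fin a'A'])
    moreover have "sum p A = p a + sum p A'" "sum q A = q a + sum q A'" using fin aA' by (auto simp: A_def)
    ultimately show "sum p' A' = sum q A'" using sA by (simp add: e_def)
  next
    fix u v assume c: "consec A' u v"
    then have uA': "u \<in> A'" by (simp add: consec_def)
    have cA: "consec A u v" using c lt by (auto simp: consec_def A_def)
    have "cum A' p' u = cum A' p u + e"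
    proof -
      have "a' \<in> {y\<in>A'. y \<le> u}" using a'A' a'min uA' by auto
      then show ?thesis unfolding cum_def p'_def by (intro sum_upd_add) (use fin in auto)
    qed
    then have "cum A' p' u - cum A' q u = cum A p u - cum A q u"
      using cumA[OF uA', of p] cumA[OF uA', of q] by (simp add: e_def)
    then show "\<bar>cum A' p' u - cum A' q u\<bar> * (v - u) \<le> t" using cons cA by simp
  qed
  obtain w' where cw': "coupl A' p' q w'" and costw': "cost A' w' \<le> real (card A' - 1) * t"
    using IH H' by blast
  have w'nn: "\<And>z. w' z \<ge> 0" and w'supp: "\<And>x y. w' (x, y) \<noteq> 0 \<Longrightarrow> x \<in> A' \<and> y \<in> A'"
    and rows': "\<And>x. x \<in> A' \<Longrightarrow> (\<Sum>y\<in>A'. w' (x, y)) = p' x"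
    and cols': "\<And>y. y \<in> A' \<Longrightarrow> (\<Sum>x\<in>A'. w' (x, y)) = q y"
    using cw' unfolding coupl_def by blast+
  have w'out1: "w' (x, y) = 0" if "x \<notin> A'" for x y using w'supp that by blast
  have w'out2: "w' (x, y) = 0" if "y \<notin> A'" for x y using w'supp that by blast
  have rowa': "(\<Sum>y\<in>A'. w' (a', y)) = P2" using rows'[OF a'A'] by (simp add: p'_def P2_def)
  have Z: "w' (a', y) = 0" if "P2 = 0" for y
  proof (cases "y \<in> A'")
    case True
    have "\<forall>y\<in>A'. w' (a', y) = 0" using rowa' that fin w'nn by (subst sum_nonneg_eq_0_iff[symmetric]) auto
    then show ?thesis using True by auto
  next
    case False then show ?thesis using w'out2 by auto
  qed
  have F1: "P2 * (w' (a', y) / P2) = w' (a', y)" for y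
    using Z by (cases "P2 = 0") auto
  have e_P2: "e = 0" if "P2 = 0" using that e0 pa'0 by (simp add: P2_def)
  have pa'_P2: "p a' = 0" if "P2 = 0" using that e0 pa'0 by (simp add: P2_def)
  have F2: "c * (\<Sum>y\<in>A'. w' (a', y) / P2) = c" if "P2 = 0 \<Longrightarrow> c = 0" for c
    using that rowa' by (cases "P2 = 0") (auto simp: sum_divide_distrib[symmetric])
  define r where "r y = w' (a', y) / P2" for y
  have ra: "r a = 0" using w'out2[OF aA'] by (simp add: r_def)
  define w where "w = (\<lambda>(x, y). if x = a then (if y = a then q a else 0) + e * r y
                                 else if x = a' then p a' * r y else w' (x, y))"
  have wa: "w (a, y) = (if y = a then q a else 0) + e * r y" for y by (simp add: w_def)
  have wa': "w (a', y) = p a' * r y" for y using aa'ne by (simp add: w_def)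
  have wo: "w (x, y) = w' (x, y)" if "x \<noteq> a" "x \<noteq> a'" for x y using that by (simp add: w_def)
  have rnn: "r y \<ge> 0" for y using w'nn P20 by (simp add: r_def)
  have sumr: "(\<Sum>y\<in>A. c * r y) = c * (\<Sum>y\<in>A'. r y)" for c
    using fin aA' ra by (simp add: A_def sum_distrib_left)
  have wnn: "\<forall>z. w z \<ge> 0"
  proof
    fix z :: "real \<times> real"
    obtain x y where z: "z = (x, y)" by (cases z)
    show "w z \<ge> 0" using rnn e0 pa'0 qn w'nn unfolding z w_def by (auto simp: A_def)
  qed
  have wsupp: "\<forall>x y. w (x, y) \<noteq> 0 \<longrightarrow> x \<in> A \<and> y \<in> A"
  proof (intro allI impI)
    fix x y assume nz: "w (x, y) \<noteq> 0"
    show "x \<in> A \<and> y \<in> A"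
    proof (cases "x = a")
      case True
      then have "y = a \<or> r y \<noteq> 0" using nz wa by auto
      then show ?thesis using True w'out2 by (auto simp: A_def r_def)
    next
      case False note xa = False
      show ?thesis
      proof (cases "x = a'")
        case True
        then have "r y \<noteq> 0" using nz wa' by auto
        then show ?thesis using True w'out2 a'A' by (auto simp: A_def r_def)
      next
        case False
        then show ?thesis using nz wo[OF xa False] w'supp by (auto simp: A_def)
      qed
    qed
  qed
  have rows: "\<forall>x\<in>A. (\<Sum>y\<in>A. w (x, y)) = p x"
  proof
    fix x assume xA: "x \<in> A"
    show "(\<Sum>y\<in>A. w (x, y)) = p x"
    proof (cases "x = a")
      case True
      have "(\<Sum>y\<in>A. w (a, y)) = (\<Sum>y\<in>A. (if y = a then q a else 0)) + (\<Sum>y\<in>A. e * r y)"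
        unfolding wa by (simp add: sum.distrib)
      also have "(\<Sum>y\<in>A. (if y = a then q a else 0)) = q a" using finA by (simp add: A_def)
      also have "(\<Sum>y\<in>A. e * r y) = e" unfolding sumr unfolding r_def by (rule F2) (rule e_P2)
      finally show ?thesis using True by (simp add: e_def)
    next
      case False note xa = False
      show ?thesis
      proof (cases "x = a'")
        case True
        have "(\<Sum>y\<in>A. w (a', y)) = (\<Sum>y\<in>A. p a' * r y)" unfolding wa' ..
        also have "\<dots> = p a'" unfolding sumr unfolding r_def by (rule F2) (rule pa'_P2)
        finally show ?thesis using True by simp
      next
        case False
        have xA': "x \<in> A'" using xA xa by (simp add: A_def)
        have "(\<Sum>y\<in>A. w (x, y)) = (\<Sum>y\<in>A. w' (x, y))" using wo[OF xa False] by simp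
        also have "\<dots> = (\<Sum>y\<in>A'. w' (x, y))" using fin aA' w'out2[OF aA'] by (simp add: A_def)
        also have "\<dots> = p x" using rows'[OF xA'] False by (simp add: p'_def)
        finally show ?thesis .
      qed
    qed
  qed
  have cols: "\<forall>y\<in>A. (\<Sum>x\<in>A. w (x, y)) = q y"
  proof
    fix y assume yA: "y \<in> A"
    have s1: "(\<Sum>x\<in>A. w (x, y)) = w (a, y) + (\<Sum>x\<in>A'. w (x, y))" using fin aA' by (simp add: A_def)
    have s2: "(\<Sum>x\<in>A'. w (x, y)) = w (a', y) + (\<Sum>x\<in>A' - {a'}. w' (x, y))"
    proof -
      have "(\<Sum>x\<in>A'. w (x, y)) = w (a', y) + (\<Sum>x\<in>A' - {a'}. w (x, y))" using fin a'A' by (simp add: sum.remove)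
      also have "(\<Sum>x\<in>A' - {a'}. w (x, y)) = (\<Sum>x\<in>A' - {a'}. w' (x, y))"
        by (rule sum.cong) (use aA' in \<open>auto intro!: wo\<close>)
      finally show ?thesis .
    qed
    show "(\<Sum>x\<in>A. w (x, y)) = q y"
    proof (cases "y = a")
      case True
      have "(\<Sum>x\<in>A' - {a'}. w' (x, y)) = 0" using True w'out2[OF aA'] by simp
      moreover have "r y = 0" using True ra by simp
      ultimately show ?thesis using s1 s2 wa wa' True by simp
    next
      case False
      have yA': "y \<in> A'" using yA False by (simp add: A_def)
      have "w (a, y) + w (a', y) = P2 * r y" using False by (simp add: wa wa' P2_def algebra_simps)
      also have "\<dots> = w' (a', y)" unfolding r_def by (rule F1)
      finally have "(\<Sum>x\<in>A. w (x, y)) = w' (a', y) + (\<Sum>x\<in>A' - {a'}. w' (x, y))" using s1 s2 by simp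
      also have "\<dots> = (\<Sum>x\<in>A'. w' (x, y))" using fin a'A' by (simp add: sum.remove)
      also have "\<dots> = q y" using cols'[OF yA'] .
      finally show ?thesis .
    qed
  qed
  have coupl: "coupl A p q w" unfolding coupl_def using wnn wsupp rows cols by blast
  define C where "C x = (\<Sum>y\<in>A'. w' (x, y) * \<bar>x - y\<bar>)" for x
  define R1 where "R1 = (\<Sum>y\<in>A'. r y * \<bar>a' - y\<bar>)"
  have rowC: "(\<Sum>y\<in>A. f y) = (\<Sum>y\<in>A'. f y)" if "f a = 0" for f :: "real \<Rightarrow> real"
    using that fin aA' by (simp add: A_def)
  have costa: "(\<Sum>y\<in>A. w (a, y) * \<bar>a - y\<bar>) \<le> e * R1 + e * (a' - a)"
  proof -
    have "(\<Sum>y\<in>A. w (a, y) * \<bar>a - y\<bar>) = (\<Sum>y\<in>A'. e * r y * \<bar>a - y\<bar>)"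
    proof -
      have "(\<Sum>y\<in>A. w (a, y) * \<bar>a - y\<bar>) = (\<Sum>y\<in>A'. w (a, y) * \<bar>a - y\<bar>)" by (rule rowC) simp
      also have "\<dots> = (\<Sum>y\<in>A'. e * r y * \<bar>a - y\<bar>)" by (rule sum.cong) (use aA' in \<open>auto simp: wa\<close>)
      finally show ?thesis .
    qed
    also have "\<dots> \<le> (\<Sum>y\<in>A'. e * r y * (\<bar>a' - y\<bar> + (a' - a)))"
    proof (rule sum_mono)
      fix y assume "y \<in> A'"
      have "\<bar>a - y\<bar> \<le> \<bar>a' - y\<bar> + (a' - a)" using aa' by linarith
      then show "e * r y * \<bar>a - y\<bar> \<le> e * r y * (\<bar>a' - y\<bar> + (a' - a))"
        using e0 rnn by (intro mult_left_mono) auto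
    qed
    also have "\<dots> = (\<Sum>y\<in>A'. e * (r y * \<bar>a' - y\<bar>) + e * (a' - a) * r y)"
      by (rule sum.cong) (auto simp: algebra_simps)
    also have "\<dots> = e * R1 + e * (a' - a) * (\<Sum>y\<in>A'. r y)"
      by (simp add: R1_def sum_distrib_left sum.distrib)
    also have "e * (a' - a) * (\<Sum>y\<in>A'. r y) = (a' - a) * (e * (\<Sum>y\<in>A'. w' (a', y) / P2))"
      by (simp add: r_def)
    also have "e * (\<Sum>y\<in>A'. w' (a', y) / P2) = e" by (rule F2) (rule e_P2)
    finally show ?thesis by (simp add: mult.commute)
  qed
  have costa': "(\<Sum>y\<in>A. w (a', y) * \<bar>a' - y\<bar>) = p a' * R1"
  proof -
    have "(\<Sum>y\<in>A. w (a', y) * \<bar>a' - y\<bar>) = (\<Sum>y\<in>A'. w (a', y) * \<bar>a' - y\<bar>)" by (rule rowC) (simp add: wa' ra)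
    also have "\<dots> = p a' * R1" by (simp add: wa' R1_def sum_distrib_left mult.assoc)
    finally show ?thesis .
  qed
  have CR: "P2 * R1 = C a'"
    unfolding R1_def C_def sum_distrib_left
  proof (rule sum.cong)
    fix y assume "y \<in> A'"
    have "P2 * (r y * \<bar>a' - y\<bar>) = (P2 * r y) * \<bar>a' - y\<bar>" by (simp only: mult.assoc)
    also have "P2 * r y = w' (a', y)" unfolding r_def by (rule F1)
    finally show "P2 * (r y * \<bar>a' - y\<bar>) = w' (a', y) * \<bar>a' - y\<bar>" .
  qed simp
  have costo: "(\<Sum>y\<in>A. w (x, y) * \<bar>x - y\<bar>) = C x" if "x \<in> A' - {a'}" for x
  proof -
    have "(\<Sum>y\<in>A. w (x, y) * \<bar>x - y\<bar>) = (\<Sum>y\<in>A. w' (x, y) * \<bar>x - y\<bar>)"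
      using that aA' by (intro sum.cong) (auto intro!: wo)
    also have "\<dots> = C x" unfolding C_def by (rule rowC) (simp add: w'out2[OF aA'])
    finally show ?thesis .
  qed
  have costw'C: "cost A' w' = C a' + (\<Sum>x\<in>A' - {a'}. C x)"
  proof -
    have "cost A' w' = (\<Sum>x\<in>A'. C x)" by (simp add: cost_def C_def)
    then show ?thesis using sum.remove[OF fin a'A', of C] by simp
  qed
  have c1: "cost A w = (\<Sum>y\<in>A. w (a, y) * \<bar>a - y\<bar>) + ((\<Sum>y\<in>A. w (a', y) * \<bar>a' - y\<bar>) + (\<Sum>x\<in>A' - {a'}. \<Sum>y\<in>A. w (x, y) * \<bar>x - y\<bar>))"
  proof -
    define RC where "RC x = (\<Sum>y\<in>A. w (x, y) * \<bar>x - y\<bar>)" for x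
    have "cost A w = (\<Sum>x\<in>A. RC x)" by (simp add: cost_def RC_def)
    also have "\<dots> = RC a + (\<Sum>x\<in>A'. RC x)" using fin aA' by (simp add: A_def)
    also have "(\<Sum>x\<in>A'. RC x) = RC a' + (\<Sum>x\<in>A' - {a'}. RC x)" by (rule sum.remove[OF fin a'A'])
    finally show ?thesis by (simp add: RC_def)
  qed
  have c2: "(\<Sum>x\<in>A' - {a'}. \<Sum>y\<in>A. w (x, y) * \<bar>x - y\<bar>) = (\<Sum>x\<in>A' - {a'}. C x)"
    by (rule sum.cong) (auto intro!: costo)
  have c3: "e * R1 + p a' * R1 = C a'" using CR by (simp add: P2_def algebra_simps)
  have c4: "e * (a' - a) \<le> t"
  proof -
    have ca: "consec A a a'" using aa' a'A' a'min by (force simp: consec_def A_def)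
    have "{y\<in>A. y \<le> a} = {a}" using lt by (auto simp: A_def)
    then have "cum A p a - cum A q a = e" by (simp add: cum_def e_def)
    then show ?thesis using cons ca e0 by force
  qed
  have "cost A w \<le> real (card A' - 1) * t + t" using c1 c2 c3 c4 costa costa' costw'C costw' by linarith
  also have "\<dots> = real (card A - 1) * t"
  proof -
    have "card A' \<ge> 1" using fin ne by (simp add: Suc_le_eq card_gt_0_iff)
    then have "card A - 1 = (card A' - 1) + 1" using fin aA' by (simp add: A_def)
    then show ?thesis by (simp add: algebra_simps)
  qed
  finally show ?thesis using coupl unfolding A_def by blast
qed



lemma transport:
  assumes "finite A"
  shows "\<forall>p q. hyp A t p q \<longrightarrow> (\<exists>w. coupl A p q w \<and> cost A w \<le> real (card A - 1) * t)"
  using assms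
proof (induction A rule: finite_linorder_min_induct)
  case empty
  show ?case
  proof (intro allI impI)
    fix p q
    show "\<exists>w. coupl {} p q w \<and> cost {} w \<le> real (card {} - 1) * t"
      by (intro exI[of _ "\<lambda>_. 0"]) (simp add: coupl_def cost_def)
  qed
next
  case (insert a A')
  show ?case
  proof (intro allI impI)
    fix p q assume H: "hyp (insert a A') t p q"
    show "\<exists>w. coupl (insert a A') p q w \<and> cost (insert a A') w \<le> real (card (insert a A') - 1) * t"
    proof (cases "A' = {}")
      case True
      then have pa: "p a = q a" "p a \<ge> 0" using H by (auto simp: hyp_def)
      define w where "w = (\<lambda>(x::real, y::real). if x = a \<and> y = a then p a else 0)"
      have "coupl (insert a A') p q w" using True pa by (auto simp: coupl_def w_def)
      moreover have "cost (insert a A') w = 0" using True by (simp add: cost_def w_def)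
      ultimately show ?thesis using True by auto
    next
      case False
      show ?thesis
      proof (cases "p a \<ge> q a")
        case True
        then show ?thesis using transport_step[OF insert(1) insert(2) False insert(3) H] by blast
      next
        case ge: False
        have H': "hyp (insert a A') t q p" using H by (auto simp: hyp_def abs_minus_commute)
        obtain w' where w': "coupl (insert a A') q p w'" "cost (insert a A') w' \<le> real (card (insert a A') - 1) * t"
          using transport_step[OF insert(1) insert(2) False insert(3) H'] ge by auto
        define w where "w z = w' (snd z, fst z)" for z
        have "coupl (insert a A') p q w" using w'(1) unfolding coupl_def w_def by auto
        moreover have "cost (insert a A') w = cost (insert a A') w'"
          unfolding cost_def w_def by (subst sum.swap) (simp add: abs_minus_commute)
        ultimately show ?thesis using w'(2) by auto
      qed
    qed
  qed
qed



theorem proposition4: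
  fixes mu1 mu2 :: "real pmf" and A :: "real set" and l k :: nat and \<gamma> :: real
  assumes "finite A" and "card A = l" and "A \<subseteq> {-1..1}"
    and "set_pmf mu1 \<subseteq> A" and "set_pmf mu2 \<subseteq> A"
    and "\<gamma> > 0" and "1 \<le> k" and "k \<le> l - 1"
    and "\<forall>a\<in>A. card {b\<in>A. b \<noteq> a \<and> \<bar>a - b\<bar> < \<gamma>} \<le> k"
  shows "W1 mu1 mu2 \<le>
    real l * ((real l * 4 ^ (l - 1)
        * Max ((\<lambda>i. \<bar>moment mu1 i - moment mu2 i\<bar>) ` {1..l - 1}))
      / \<gamma> powr (real l - real k - 1)) powr (1 / real k)"
proof -
  note finA = assms(1) and cardA = assms(2) and subA = assms(3) and s1 = assms(4) and s2 = assms(5)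
    and gpos = assms(6) and k1 = assms(7) and kl = assms(8) and nb = assms(9)
  have l2: "l \<ge> 2" using k1 kl by simp
  define \<delta> where "\<delta> = Max ((\<lambda>i. \<bar>moment mu1 i - moment mu2 i\<bar>) ` {1..l - 1})"
  define X where "X = (real l * 4 ^ (l - 1) * \<delta>) / \<gamma> powr (real l - real k - 1)"
  define t where "t = X powr (1 / real k)"
  have mom: "moment mu i = (\<Sum>x\<in>A. x ^ i * pmf mu x)" if "set_pmf mu \<subseteq> A" for mu i
    unfolding moment_def using integral_measure_pmf_real[OF finA, of mu "\<lambda>x. x ^ i"] that by auto
  define D where "D x = pmf mu1 x - pmf mu2 x" for x
  have sD: "sum D A = 0"
    using sum_pmf_eq_1[OF finA s1] sum_pmf_eq_1[OF finA s2] by (simp add: D_def sum_subtractf)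
  have MD: "(\<Sum>x\<in>A. x ^ i * D x) = moment mu1 i - moment mu2 i" for i
    using mom[OF s1, of i] mom[OF s2, of i] by (simp add: D_def algebra_simps sum_subtractf)
  have finI: "finite ((\<lambda>i. \<bar>moment mu1 i - moment mu2 i\<bar>) ` {1..l - 1})" by simp
  have Mb: "\<forall>i. 1 \<le> i \<and> i \<le> card A - 1 \<longrightarrow> \<bar>\<Sum>x\<in>A. x ^ i * D x\<bar> \<le> \<delta>"
    unfolding MD \<delta>_def cardA using finI by (auto intro!: Max_ge)
  have \<delta>0: "\<delta> \<ge> 0"
  proof -
    have "\<bar>\<Sum>x\<in>A. x ^ 1 * D x\<bar> \<le> \<delta>" using Mb l2 cardA by auto
    then show ?thesis by linarith
  qed
  have gp: "\<gamma> powr (real l - real k - 1) = \<gamma> ^ (l - 1 - k)"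
  proof -
    have "real l - real k - 1 = real (l - 1 - k)" using kl l2 by (simp add: of_nat_diff)
    then show ?thesis by (simp only: powr_realpow[OF gpos])
  qed
  have X0: "X \<ge> 0" unfolding X_def gp using \<delta>0 gpos by simp
  have t0: "t \<ge> 0" unfolding t_def by simp
  have tk: "t ^ k = X"
  proof -
    have "t ^ k = t powr real k" using t0 k1 by (simp add: powr_realpow')
    also have "\<dots> = X powr (1 / real k * real k)" unfolding t_def by (rule powr_powr)
    also have "\<dots> = X" using k1 X0 by simp
    finally show ?thesis .
  qed
  have cum01: "0 \<le> cum A (pmf mu) u \<and> cum A (pmf mu) u \<le> 1" if "set_pmf mu \<subseteq> A" for mu u
  proof -
    have "cum A (pmf mu) u \<le> sum (pmf mu) A"
      unfolding cum_def using finA by (intro sum_mono2) auto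
    then show ?thesis using sum_pmf_eq_1[OF finA that] by (simp add: cum_def sum_nonneg)
  qed
  have H: "hyp A t (pmf mu1) (pmf mu2)"
    unfolding hyp_def
  proof (intro conjI allI impI ballI)
    show "sum (pmf mu1) A = sum (pmf mu2) A" using sum_pmf_eq_1[OF finA s1] sum_pmf_eq_1[OF finA s2] by simp
  next
    fix u v assume c: "consec A u v"
    then have uv: "u \<in> A" "v \<in> A" "u < v" "\<forall>c\<in>A. \<not> (u < c \<and> c < v)" by (auto simp: consec_def)
    define G where "G = v - u"
    have G0: "G > 0" using uv by (simp add: G_def)
    define dc where "dc = \<bar>cum A (pmf mu1) u - cum A (pmf mu2) u\<bar>"
    show "\<bar>cum A (pmf mu1) u - cum A (pmf mu2) u\<bar> * (v - u) \<le> t"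
    proof (cases "G \<le> t")
      case True
      have "dc \<le> 1" using cum01[OF s1, of u] cum01[OF s2, of u] by (simp add: dc_def abs_le_iff)
      then have "dc * G \<le> 1 * G" using G0 by (intro mult_right_mono) auto
      then show ?thesis using True by (simp add: dc_def G_def)
    next
      case False
      interpret cut A u v \<gamma> k
        by unfold_locales (use finA subA uv gpos k1 nb in auto)
      have kl': "k \<le> card A - 1" using kl cardA by simp
      have db: "\<bar>\<Sum>x\<in>{y\<in>A. y \<le> u}. D x\<bar> \<le> \<delta> * (real (card A - 1) * 4 ^ (card A - 1) / (g ^ k * \<gamma> ^ (card A - 1 - k)))"
        by (rule D_bound[OF sD Mb \<delta>0 kl'])
      have "cum A (pmf mu1) u - cum A (pmf mu2) u = (\<Sum>x\<in>{y\<in>A. y \<le> u}. D x)"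
        by (simp add: cum_def D_def sum_subtractf)
      then have db': "dc \<le> \<delta> * (real (l - 1) * 4 ^ (l - 1) / (G ^ k * \<gamma> ^ (l - 1 - k)))"
        using db cardA by (simp add: dc_def g_def G_def)
      have Kp: "\<gamma> ^ (l - 1 - k) > 0" using gpos by simp
      have GK: "G ^ k > 0" using G0 by simp
      have "\<delta> * (real (l - 1) * 4 ^ (l - 1) / (G ^ k * \<gamma> ^ (l - 1 - k))) \<le> X / G ^ k"
      proof -
        have "real (l - 1) \<le> real l" by simp
        then have "\<delta> * (real (l - 1) * 4 ^ (l - 1)) \<le> \<delta> * (real l * 4 ^ (l - 1))"
          using \<delta>0 by (intro mult_left_mono) auto
        then have "\<delta> * (real (l - 1) * 4 ^ (l - 1)) / (G ^ k * \<gamma> ^ (l - 1 - k)) \<le> \<delta> * (real l * 4 ^ (l - 1)) / (G ^ k * \<gamma> ^ (l - 1 - k))"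
          using Kp GK by (intro divide_right_mono) auto
        moreover have "X / G ^ k = \<delta> * (real l * 4 ^ (l - 1)) / (G ^ k * \<gamma> ^ (l - 1 - k))"
          unfolding X_def gp by (simp add: divide_divide_eq_left mult.commute mult.left_commute)
        ultimately show ?thesis by simp
      qed
      then have "dc * G \<le> (X / G ^ k) * G" using db' G0 by (intro mult_right_mono) auto
      also have "(X / G ^ k) * G = X / G ^ (k - 1)"
      proof -
        have "G ^ k = G * G ^ (k - 1)" using k1 by (metis Suc_diff_1 less_le_trans zero_less_one power_Suc)
        then show ?thesis using G0 by (simp add: field_simps)
      qed
      also have "X / G ^ (k - 1) \<le> t"
      proof -
        have "t ^ (k - 1) \<le> G ^ (k - 1)" using False t0 by (intro power_mono) auto
        then have "t * t ^ (k - 1) \<le> t * G ^ (k - 1)" using t0 by (intro mult_left_mono) auto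
        moreover have "t * t ^ (k - 1) = X" using tk k1 by (metis Suc_diff_1 less_le_trans zero_less_one power_Suc)
        ultimately show ?thesis using G0 by (simp add: divide_le_eq)
      qed
      finally show ?thesis by (simp add: dc_def G_def)
    qed
  qed simp_all
  obtain w where wc: "coupl A (pmf mu1) (pmf mu2) w" and costw: "cost A w \<le> real (card A - 1) * t"
    using transport[OF finA, of t] H by blast
  have wnn: "\<And>z. w z \<ge> 0" and wsupp: "\<And>x y. w (x, y) \<noteq> 0 \<Longrightarrow> x \<in> A \<and> y \<in> A"
    and rows: "\<And>x. x \<in> A \<Longrightarrow> (\<Sum>y\<in>A. w (x, y)) = pmf mu1 x"
    and cols: "\<And>y. y \<in> A \<Longrightarrow> (\<Sum>x\<in>A. w (x, y)) = pmf mu2 y"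
    using wc unfolding coupl_def by blast+
  have wout: "w z = 0" if "z \<notin> A \<times> A" for z using wsupp that by (cases z) auto
  have sumw: "(\<Sum>z\<in>A \<times> A. w z) = 1"
  proof -
    have "(\<Sum>z\<in>A \<times> A. w z) = (\<Sum>x\<in>A. \<Sum>y\<in>A. w (x, y))" by (simp add: sum.cartesian_product)
    also have "\<dots> = (\<Sum>x\<in>A. pmf mu1 x)" using rows by simp
    also have "\<dots> = 1" by (rule sum_pmf_eq_1[OF finA s1])
    finally show ?thesis .
  qed
  have nn1: "(\<integral>\<^sup>+z. ennreal (w z) \<partial>count_space UNIV) = 1"
  proof -
    have "(\<integral>\<^sup>+z. ennreal (w z) \<partial>count_space UNIV) = (\<Sum>z\<in>A \<times> A. ennreal (w z))"
      by (rule nn_integral_count_space') (use finA wout in auto)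
    also have "\<dots> = ennreal (\<Sum>z\<in>A \<times> A. w z)" using wnn by simp
    finally show ?thesis using sumw by simp
  qed
  define \<pi> where "\<pi> = embed_pmf w"
  have pmf\<pi>: "pmf \<pi> z = w z" for z unfolding \<pi>_def by (rule pmf_embed_pmf[OF wnn nn1])
  have set\<pi>: "set_pmf \<pi> \<subseteq> A \<times> A"
    unfolding \<pi>_def set_embed_pmf[OF wnn nn1] using wout by auto
  have finAA: "finite (A \<times> A)" using finA by simp
  have m1: "map_pmf fst \<pi> = mu1"
  proof (rule pmf_eqI)
    fix x
    have "pmf (map_pmf fst \<pi>) x = measure \<pi> (fst -` {x})" by (rule pmf_map)
    also have "\<dots> = measure \<pi> (fst -` {x} \<inter> set_pmf \<pi>)" by (rule measure_Int_set_pmf[symmetric])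
    also have "fst -` {x} \<inter> set_pmf \<pi> = ({x} \<times> A) \<inter> set_pmf \<pi>" using set\<pi> by auto
    also have "measure \<pi> (({x} \<times> A) \<inter> set_pmf \<pi>) = measure \<pi> ({x} \<times> A)" by (rule measure_Int_set_pmf)
    also have "\<dots> = sum (pmf \<pi>) ({x} \<times> A)" using finA by (simp add: measure_measure_pmf_finite)
    also have "\<dots> = (\<Sum>y\<in>A. w (x, y))"
    proof -
      have "{x} \<times> A = Pair x ` A" by auto
      then show ?thesis by (simp add: sum.reindex inj_on_def pmf\<pi>)
    qed
    also have "\<dots> = pmf mu1 x"
    proof (cases "x \<in> A")
      case True then show ?thesis using rows by simp
    next
      case False
      then have "pmf mu1 x = 0" using s1 by (auto simp: pmf_eq_0_set_pmf)
      moreover have "(\<Sum>z\<in>A. w (x, z)) = 0" using False by (auto intro!: sum.neutral wout)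
      ultimately show ?thesis by simp
    qed
    finally show "pmf (map_pmf fst \<pi>) x = pmf mu1 x" .
  qed
  have m2: "map_pmf snd \<pi> = mu2"
  proof (rule pmf_eqI)
    fix y
    have "pmf (map_pmf snd \<pi>) y = measure \<pi> (snd -` {y})" by (rule pmf_map)
    also have "\<dots> = measure \<pi> (snd -` {y} \<inter> set_pmf \<pi>)" by (rule measure_Int_set_pmf[symmetric])
    also have "snd -` {y} \<inter> set_pmf \<pi> = (A \<times> {y}) \<inter> set_pmf \<pi>" using set\<pi> by auto
    also have "measure \<pi> ((A \<times> {y}) \<inter> set_pmf \<pi>) = measure \<pi> (A \<times> {y})" by (rule measure_Int_set_pmf)
    also have "\<dots> = sum (pmf \<pi>) (A \<times> {y})" using finA by (simp add: measure_measure_pmf_finite)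
    also have "\<dots> = (\<Sum>x\<in>A. w (x, y))"
    proof -
      have "A \<times> {y} = (\<lambda>x. (x, y)) ` A" by auto
      then show ?thesis by (simp add: sum.reindex inj_on_def pmf\<pi>)
    qed
    also have "\<dots> = pmf mu2 y"
    proof (cases "y \<in> A")
      case True then show ?thesis using cols by simp
    next
      case False
      then have "pmf mu2 y = 0" using s2 by (auto simp: pmf_eq_0_set_pmf)
      moreover have "(\<Sum>z\<in>A. w (z, y)) = 0" using False by (auto intro!: sum.neutral wout)
      ultimately show ?thesis by simp
    qed
    finally show "pmf (map_pmf snd \<pi>) y = pmf mu2 y" .
  qed
  have E: "measure_pmf.expectation \<pi> (\<lambda>(x, y). \<bar>x - y\<bar>) = cost A w"
  proof -
    have "measure_pmf.expectation \<pi> (\<lambda>(x, y). \<bar>x - y\<bar>) = (\<Sum>z\<in>A \<times> A. (case z of (x, y) \<Rightarrow> \<bar>x - y\<bar>) * pmf \<pi> z)"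
      by (rule integral_measure_pmf_real[OF finAA]) (use set\<pi> in auto)
    also have "\<dots> = (\<Sum>z\<in>A \<times> A. (case z of (x, y) \<Rightarrow> \<bar>x - y\<bar> * w (x, y)))"
      by (rule sum.cong) (auto simp: pmf\<pi>)
    also have "\<dots> = (\<Sum>x\<in>A. \<Sum>y\<in>A. \<bar>x - y\<bar> * w (x, y))" by (simp add: sum.cartesian_product)
    also have "\<dots> = cost A w" by (simp add: cost_def mult.commute)
    finally show ?thesis .
  qed
  have "W1 mu1 mu2 \<le> measure_pmf.expectation \<pi> (\<lambda>(x, y). \<bar>x - y\<bar>)"
    unfolding W1_def
  proof (rule cInf_lower)
    show "measure_pmf.expectation \<pi> (\<lambda>(x, y). \<bar>x - y\<bar>) \<in> {measure_pmf.expectation \<pi> (\<lambda>(x, y). \<bar>x - y\<bar>) | \<pi>.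
                    map_pmf fst \<pi> = mu1 \<and> map_pmf snd \<pi> = mu2}" using m1 m2 by blast
    show "bdd_below {measure_pmf.expectation \<pi> (\<lambda>(x, y). \<bar>x - y\<bar>) | \<pi>.
                    map_pmf fst \<pi> = mu1 \<and> map_pmf snd \<pi> = mu2}"
      by (rule bdd_belowI[of _ 0]) (auto intro!: integral_nonneg simp: split_beta)
  qed
  also have "\<dots> \<le> real (card A - 1) * t" using E costw by simp
  also have "\<dots> \<le> real l * t" using cardA t0 by (intro mult_right_mono) auto
  finally show ?thesis unfolding t_def X_def \<delta>_def .
qed

end
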